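(* Let $\sigma>0$, $\bar\gamma>0$, $c_\infty\ge0$, and let $\kappa:[0,\infty)\to\mathbb{R}$ be $L_\kappa$-Lipschitz with $\kappa(0)=0$; set $\tau_\gamma(w)=w+\gamma\kappa(w)$. Let $(\gamma_n)\subset(0,\bar\gamma]$ with $\gamma_n\to0$, $w_0\ge0$, and let $(W^{(n)}_k)_{k\in\mathbb{N}}$ be the Markov chain with $W^{(n)}_0=w_0$ and kernel $Q_{\gamma_n}$, where $$Q_\gamma(w,A)=\delta_0(A)\int_{\mathbb{R}}\bar p_{\sigma^2\gamma}(\tau_\gamma(w)+\gamma c_\infty,g)\varphi(g)dg+\int_{\mathbb{R}}\mathbb{1}_A(\tau_\gamma(w)+\gamma c_\infty-2\sigma\gamma^{1/2}g)\{1-\bar p_{\sigma^2\gamma}(\tau_\gamma(w)+\gamma c_\infty,g)\}\varphi(g)dg,$$ $\bar p_{\sigma^2\gamma}(a,g)=1\wedge\varphi_{\sigma^2\gamma}(a-\sigma\sqrt\gamma g)/\varphi_{\sigma^2\gamma}(\sigma\sqrt\gamma g)$. Let $\mathbf W^{(n)}_t=W^{(n)}_{\lfloor t/\gamma_n\rfloor}+\{W^{(n)}_{\lceil t/\gamma_n\rceil}-W^{(n)}_{\lfloor t/\gamma_n\rfloor}\}\{t/\gamma_n-\lfloor t/\gamma_n\rfloor\}$. Then for every $T\ge0$ there exists $C_T\ge0$ such that $$\sup_{n\in\mathbb{N}}\mathbb{E}\Big[\sup_{t\in[0,T]}\{\mathbf W^{(n)}_t\}^4\Big]\le C_T.$$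
   Context: $\varphi$ is the standard normal density and $\varphi_s(t)=(2\pi s)^{-1/2}e^{-t^2/(2s)}$. *)

theory Defs
  imports "HOL-Probability.Probability"
begin

definition phi_var :: "real \<Rightarrow> real \<Rightarrow> real" where
  "phi_var s t = exp (- t\<^sup>2 / (2 * s)) / sqrt (2 * pi * s)"

definition pbar :: "real \<Rightarrow> real \<Rightarrow> real \<Rightarrow> real \<Rightarrow> real" where
  "pbar \<sigma> \<gamma> a g =
     min 1 (phi_var (\<sigma>\<^sup>2 * \<gamma>) (a - \<sigma> * sqrt \<gamma> * g) / phi_var (\<sigma>\<^sup>2 * \<gamma>) (\<sigma> * sqrt \<gamma> * g))"

text \<open>tau_gamma(w) = w + gamma kappa(w). kappa is only given on [0,oo); we evaluate it at
  max 0 w, which agrees with kappa(w) for every w >= 0 (the state space of the chain).\<close>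
definition tau :: "(real \<Rightarrow> real) \<Rightarrow> real \<Rightarrow> real \<Rightarrow> real" where
  "tau \<kappa> \<gamma> w = w + \<gamma> * \<kappa> (max 0 w)"

text \<open>Its measure of A is exactly the formula of the paper.\<close>
definition Qker :: "real \<Rightarrow> real \<Rightarrow> (real \<Rightarrow> real) \<Rightarrow> real \<Rightarrow> real \<Rightarrow> real measure" where
  "Qker \<sigma> cinf \<kappa> \<gamma> w =
     (let a = tau \<kappa> \<gamma> w + \<gamma> * cinf in
      std_normal_distribution \<bind> (\<lambda>g.
        measure_pmf (bernoulli_pmf (pbar \<sigma> \<gamma> a g)) \<bind> (\<lambda>b.
          return borel (if b then 0 else a - 2 * \<sigma> * sqrt \<gamma> * g))))"

text \<open>Law of the first k+1 states (W_0,...,W_k) of the Markov chain with W_0 = w0 and kernel Q,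
  as a measure on sequences nat => real (coordinates beyond k are irrelevant, kept equal to w0).\<close>
abbreviation seq_space :: "(nat \<Rightarrow> real) measure" where
  "seq_space \<equiv> Pi\<^sub>M UNIV (\<lambda>_. borel)"

primrec chain_law :: "(real \<Rightarrow> real measure) \<Rightarrow> real \<Rightarrow> nat \<Rightarrow> (nat \<Rightarrow> real) measure" where
  "chain_law Q w0 0 = return seq_space (\<lambda>_. w0)"
| "chain_law Q w0 (Suc k) =
     chain_law Q w0 k \<bind> (\<lambda>\<omega>. distr (Q (\<omega> k)) seq_space (\<lambda>y. fun_upd \<omega> (Suc k) y))"

definition interp :: "real \<Rightarrow> (nat \<Rightarrow> real) \<Rightarrow> real \<Rightarrow> real" where
  "interp \<gamma> \<omega> t =
     \<omega> (nat \<lfloor>t / \<gamma>\<rfloor>) + (\<omega> (nat \<lceil>t / \<gamma>\<rceil>) - \<omega> (nat \<lfloor>t / \<gamma>\<rfloor>)) * (t / \<gamma> - of_int \<lfloor>t / \<gamma>\<rfloor>)"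

end

theory Submission
  imports Defs
begin


definition bk :: "real \<Rightarrow> real \<Rightarrow> real \<Rightarrow> real measure" where
  "bk p z x = measure_pmf (bernoulli_pmf p) \<bind> (\<lambda>b. return borel (if b then z else x))"

lemma bk_meas_ret: "(\<lambda>b. return borel (if b then z else x)) \<in> measurable (measure_pmf (bernoulli_pmf p)) (subprob_algebra borel)"
  by (subst measurable_cong_sets[OF sets_measure_pmf_count_space refl])
     (auto simp: measurable_count_space_eq1 space_subprob_algebra subprob_space_return)

lemma bk_nn:
  assumes "0 \<le> p" "p \<le> 1" "f \<in> borel_measurable borel"
  shows "(\<integral>\<^sup>+y. f y \<partial>bk p z x) = ennreal p * f z + ennreal (1 - p) * f x"
  unfolding bk_def
  using assms
  by (subst nn_integral_bind[OF assms(3) bk_meas_ret]) (simp add: nn_integral_return mult.commute)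

lemma bk_sets: "sets (bk p z x) = sets borel"
  unfolding bk_def by (subst sets_bind) auto

lemma bk_emeasure:
  assumes "0 \<le> p" "p \<le> 1" "X \<in> sets borel"
  shows "emeasure (bk p z x) X = ennreal p * indicator X z + ennreal (1 - p) * indicator X x"
proof -
  have "emeasure (bk p z x) X = (\<integral>\<^sup>+y. indicator X y \<partial>bk p z x)"
    by (subst nn_integral_indicator) (auto simp: bk_sets assms)
  also have "\<dots> = ennreal p * indicator X z + ennreal (1 - p) * indicator X x" using assms by (subst bk_nn) auto
  finally show ?thesis .
qed

lemma bk_prob: assumes "0 \<le> p" "p \<le> 1" shows "prob_space (bk p z x)"
proof
  have "space (bk p z x) = UNIV" using sets_eq_imp_space_eq[OF bk_sets] by simp
  then show "emeasure (bk p z x) (space (bk p z x)) = 1"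
    using assms by (simp add: bk_emeasure ennreal_plus[symmetric] del: ennreal_plus)
qed

lemma bk_measurable:
  assumes [measurable]: "p \<in> borel_measurable M" "h \<in> borel_measurable M"
    and "\<And>x. 0 \<le> p x \<and> p x \<le> 1"
  shows "(\<lambda>x. bk (p x) z (h x)) \<in> M \<rightarrow>\<^sub>M prob_algebra borel"
proof (rule measurable_prob_algebraI)
  show "prob_space (bk (p x) z (h x))" for x using assms(3) by (intro bk_prob) auto
  show "(\<lambda>x. bk (p x) z (h x)) \<in> M \<rightarrow>\<^sub>M subprob_algebra borel"
  proof (rule measurable_subprob_algebra)
    show "subprob_space (bk (p a) z (h a))" for a
      using assms(3) by (intro prob_space_imp_subprob_space bk_prob) auto
    show "sets (bk (p a) z (h a)) = sets borel" for a by (rule bk_sets)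
    fix A :: "real set" assume A: "A \<in> sets borel"
    show "(\<lambda>a. emeasure (bk (p a) z (h a)) A) \<in> borel_measurable M"
      using assms(3) A by (subst bk_emeasure) auto
  qed
qed

lemma kappa_meas:
  fixes \<kappa> :: "real \<Rightarrow> real"
  assumes "L-lipschitz_on {0..} \<kappa>"
  shows "(\<lambda>w. \<kappa> (max 0 w)) \<in> borel_measurable borel"
proof (rule borel_measurable_continuous_onI)
  have c1: "continuous_on {0..} \<kappa>" by (rule lipschitz_on_continuous_on[OF assms])
  have c2: "continuous_on UNIV (\<lambda>w::real. max 0 w)"
    using continuous_on_max[OF continuous_on_const continuous_on_id] .
  show "continuous_on UNIV (\<lambda>w. \<kappa> (max 0 w))"
    by (rule continuous_on_compose2[OF c1 c2]) auto
qed

lemma pbar_range: "0 \<le> pbar \<sigma> \<gamma> a g \<and> pbar \<sigma> \<gamma> a g \<le> 1"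
  unfolding pbar_def phi_var_def by (auto intro!: divide_nonneg_nonneg)

lemma Qker_eq: "Qker \<sigma> cinf \<kappa> \<gamma> w = std_normal_distribution \<bind>
   (\<lambda>g. bk (pbar \<sigma> \<gamma> (tau \<kappa> \<gamma> w + \<gamma> * cinf) g) 0 (tau \<kappa> \<gamma> w + \<gamma> * cinf - 2 * \<sigma> * sqrt \<gamma> * g))"
  unfolding Qker_def bk_def Let_def ..

lemma std_normal_space: "std_normal_distribution \<in> space (prob_algebra borel)"
  unfolding space_prob_algebra using prob_space_normal_density[of 1 0] by simp

lemma Qker_meas:
  assumes "L-lipschitz_on {0..} \<kappa>"
  shows "Qker \<sigma> cinf \<kappa> \<gamma> \<in> borel \<rightarrow>\<^sub>M prob_algebra borel"
proof -
  note km[measurable] = kappa_meas[OF assms]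
  have bm: "(\<lambda>x. bk (pbar \<sigma> \<gamma> (tau \<kappa> \<gamma> (fst x) + \<gamma> * cinf) (snd x)) 0
      (tau \<kappa> \<gamma> (fst x) + \<gamma> * cinf - 2 * \<sigma> * sqrt \<gamma> * (snd x)))
      \<in> (borel \<Otimes>\<^sub>M std_normal_distribution) \<rightarrow>\<^sub>M prob_algebra borel"
    by (rule bk_measurable) (auto simp: pbar_range pbar_def phi_var_def tau_def cong: measurable_cong_sets sets_pair_measure_cong)
  show ?thesis
    unfolding Qker_eq[abs_def]
    by (rule measurable_bind_prob_space2[OF measurable_const[OF std_normal_space]]) (use bm in \<open>simp add: split_beta'\<close>)
qed

lemma Qker_nn:
  assumes "f \<in> borel_measurable borel"
  shows "(\<integral>\<^sup>+y. f y \<partial>Qker \<sigma> cinf \<kappa> \<gamma> w) =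
    (\<integral>\<^sup>+g. ennreal (std_normal_density g) * (ennreal (pbar \<sigma> \<gamma> (tau \<kappa> \<gamma> w + \<gamma> * cinf) g) * f 0
       + ennreal (1 - pbar \<sigma> \<gamma> (tau \<kappa> \<gamma> w + \<gamma> * cinf) g) * f (tau \<kappa> \<gamma> w + \<gamma> * cinf - 2 * \<sigma> * sqrt \<gamma> * g)) \<partial>lborel)"
proof -
  have bm: "(\<lambda>g. bk (pbar \<sigma> \<gamma> (tau \<kappa> \<gamma> w + \<gamma> * cinf) g) 0
      (tau \<kappa> \<gamma> w + \<gamma> * cinf - 2 * \<sigma> * sqrt \<gamma> * g))
      \<in> std_normal_distribution \<rightarrow>\<^sub>M prob_algebra borel"
    by (rule bk_measurable) (auto simp: pbar_range pbar_def phi_var_def cong: measurable_cong_sets)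
    note [measurable] = assms
    have [measurable]: "(\<lambda>g. pbar \<sigma> \<gamma> (tau \<kappa> \<gamma> w + \<gamma> * cinf) g) \<in> borel_measurable borel"
      unfolding pbar_def phi_var_def by measurable
    show ?thesis unfolding Qker_eq
    apply (subst nn_integral_bind[OF assms measurable_prob_algebraD[OF bm]])
    apply (subst nn_integral_density)
      apply (auto simp: bk_nn pbar_range assms)
    apply measurable
    done
qed



lemma poly_lower: "(M::real)^4 \<le> 3*M^4 - 4*M^3*u + 8*u^4"
proof -
  have "2*M^4 - 4*M^3*u + 8*u^4 = 2*(M^2 - M*u - u^2)^2 + 2*u^2*(M-u)^2 + 4*u^4"
    by (simp add: algebra_simps power2_eq_square power4_eq_xxxx power3_eq_cube)
  moreover have "0 \<le> 2*(M^2 - M*u - u^2)^2 + 2*u^2*(M-u)^2 + 4*u^4" by simp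
  ultimately show ?thesis by linarith
qed

lemma poly_step:
  assumes "(0::real) \<le> M" "0 \<le> v"
  shows "3*(max M v)^4 - 4*(max M v)^3* v + 8* v^4 \<le> 3*M^4 - 4*M^3* v + 8* v^4"
proof (cases "v \<le> M")
  case False
  have "3*M^4 - 4*M^3* v + v^4 = (v-M)^2*(v^2 + 2 * v * M + 3*M^2)"
    by (simp add: algebra_simps power2_eq_square power4_eq_xxxx power3_eq_cube)
  moreover have "0 \<le> (v-M)^2*(v^2 + 2 * v * M + 3*M^2)" using assms by simp
  ultimately show ?thesis using False by (simp add: max_def power4_eq_xxxx power3_eq_cube)
qed (simp add: max_def)

abbreviation "\<phi> \<equiv> std_normal_density"

lemma phi_pos: "0 < \<phi> x" by (simp add: normal_density_pos)

lemma integrable_phi_lin: "integrable lborel (\<lambda>g. \<phi> g * (a - c * g))"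
proof -
  have "integrable lborel (\<lambda>g. a * (\<phi> g * g^0) - c * (\<phi> g * g^1))"
    by (intro Bochner_Integration.integrable_diff Bochner_Integration.integrable_mult_right integrable_std_normal_moment)
  then show ?thesis by (simp add: algebra_simps)
qed

lemma integral_phi_lin: "(\<integral>g. \<phi> g * (a - c * g) \<partial>lborel) = a"
proof -
  have "(\<integral>g. \<phi> g * (a - c * g) \<partial>lborel) = (\<integral>g. a * (\<phi> g * g^(2*0)) - c * (\<phi> g * g^(2*0+1)) \<partial>lborel)"
    by (simp add: algebra_simps)
  also have "\<dots> = a * (\<integral>g. \<phi> g * g^(2*0) \<partial>lborel) - c * (\<integral>g. \<phi> g * g^(2*0+1) \<partial>lborel)"
    by (simp only: Bochner_Integration.integral_diff Bochner_Integration.integral_mult_right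
        Bochner_Integration.integrable_mult_right integrable_std_normal_moment)
  also have "\<dots> = a"
    by (simp only: integral_std_normal_moment_even integral_std_normal_moment_odd) simp
  finally show ?thesis .
qed

lemma quartic_expand: "(a - c * g)^4 = a^4 * g^(2*0) - 4*a^3*c * g^(2*0+1) + 6*a^2*c^2 * g^(2*1)
   - 4*a*c^3 * g^(2*1+1) + c^4 * g^(2*2)" for a c g :: real
  by (simp add: algebra_simps power2_eq_square power4_eq_xxxx power3_eq_cube numeral_eq_Suc)

lemma integrable_phi_quartic: "integrable lborel (\<lambda>g. \<phi> g * (a - c * g)^4)"
proof -
  have "integrable lborel (\<lambda>g. a^4 * (\<phi> g * g^(2*0)) - 4*a^3*c * (\<phi> g * g^(2*0+1)) + 6*a^2*c^2 * (\<phi> g * g^(2*1))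
   - 4*a*c^3 * (\<phi> g * g^(2*1+1)) + c^4 * (\<phi> g * g^(2*2)))"
    by (intro Bochner_Integration.integrable_diff Bochner_Integration.integrable_add Bochner_Integration.integrable_mult_right integrable_std_normal_moment)
  then show ?thesis by (simp only: quartic_expand) (simp add: algebra_simps)
qed

lemma integral_phi_quartic: "(\<integral>g. \<phi> g * (a - c * g)^4 \<partial>lborel) = a^4 + 6*a^2*c^2 + 3*c^4"
proof -
  have "(\<integral>g. \<phi> g * (a - c * g)^4 \<partial>lborel) = (\<integral>g. a^4 * (\<phi> g * g^(2*0)) - 4*a^3*c * (\<phi> g * g^(2*0+1)) + 6*a^2*c^2 * (\<phi> g * g^(2*1))
   - 4*a*c^3 * (\<phi> g * g^(2*1+1)) + c^4 * (\<phi> g * g^(2*2)) \<partial>lborel)"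
    by (simp only: quartic_expand) (simp add: algebra_simps)
  also have "\<dots> = a^4 * (\<integral>g. \<phi> g * g^(2*0) \<partial>lborel) - 4*a^3*c * (\<integral>g. \<phi> g * g^(2*0+1) \<partial>lborel)
     + 6*a^2*c^2 * (\<integral>g. \<phi> g * g^(2*1) \<partial>lborel)
   - 4*a*c^3 * (\<integral>g. \<phi> g * g^(2*1+1) \<partial>lborel) + c^4 * (\<integral>g. \<phi> g * g^(2*2) \<partial>lborel)"
    by (simp only: Bochner_Integration.integral_diff Bochner_Integration.integral_add Bochner_Integration.integral_mult_right Bochner_Integration.integrable_diff Bochner_Integration.integrable_add
        Bochner_Integration.integrable_mult_right integrable_std_normal_moment)
  also have "\<dots> = a^4 + 6*a^2*c^2 + 3*c^4"
    by (simp only: integral_std_normal_moment_even integral_std_normal_moment_odd) (simp add: fact_numeral)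
  finally show ?thesis .
qed



lemma pbar_meas[measurable]: "(\<lambda>g. pbar \<sigma> \<gamma> a g) \<in> borel_measurable borel"
  unfolding pbar_def phi_var_def by measurable

lemma pbar_sym:
  assumes "\<sigma> > 0" "\<gamma> > 0"
  shows "\<phi> g * pbar \<sigma> \<gamma> a g = min (\<phi> g) (\<phi> (a / (\<sigma> * sqrt \<gamma>) - g))"
proof -
  define s where "s = \<sigma> * sqrt \<gamma>"
  have s: "s > 0" using assms by (simp add: s_def)
  have S: "\<sigma>\<^sup>2 * \<gamma> = s^2" using assms by (simp add: s_def power_mult_distrib)
  have e1: "phi_var (s^2) (s * g) = exp (-(g\<^sup>2) / 2) / sqrt (2 * pi * s\<^sup>2)"
    unfolding phi_var_def using s by (simp add: power_mult_distrib)
  have e2: "(a / s - g)^2 / 2 = (a - s * g)^2 / (2 * s^2)"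
    using s by (simp add: field_simps power2_eq_square)
  have "\<phi> g * (phi_var (s^2) (a - s * g) / phi_var (s^2) (s * g)) = \<phi> (a / s - g)"
    unfolding e1 std_normal_density_def
    unfolding phi_var_def e2
    using s by (simp add: field_simps)
  then have "\<phi> g * pbar \<sigma> \<gamma> a g = min (\<phi> g) (\<phi> (a / s - g))"
    unfolding pbar_def S s_def[symmetric] using phi_pos[of g]
    by (simp add: min_mult_distrib_left)
  then show ?thesis by (simp add: s_def)
qed

lemma integrable_wP_lin:
  assumes [measurable]: "P \<in> borel_measurable borel" and "\<And>g. \<bar>P g\<bar> \<le> 1"
  shows "integrable lborel (\<lambda>g. \<phi> g * P g * (a - c * g))"
proof (rule Bochner_Integration.integrable_bound[OF integrable_phi_lin[of a c]])
  show "(\<lambda>g. \<phi> g * P g * (a - c * g)) \<in> borel_measurable lborel" by measurable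
  show "AE x in lborel. norm (\<phi> x * P x * (a - c * x)) \<le> norm (\<phi> x * (a - c * x))"
  proof (rule AE_I2)
    fix x
    have "\<bar>\<phi> x * P x * (a - c * x)\<bar> = \<bar>P x\<bar> * \<bar>\<phi> x * (a - c * x)\<bar>" by (simp add: abs_mult)
    also have "\<dots> \<le> 1 * \<bar>\<phi> x * (a - c * x)\<bar>" by (rule mult_right_mono[OF assms(2)]) simp
    finally show "norm (\<phi> x * P x * (a - c * x)) \<le> norm (\<phi> x * (a - c * x))" by simp
  qed
qed

lemma integrable_wP_quartic:
  assumes [measurable]: "P \<in> borel_measurable borel" and "\<And>g. \<bar>P g\<bar> \<le> 1"
  shows "integrable lborel (\<lambda>g. \<phi> g * P g * (a - c * g)^4)"
proof (rule Bochner_Integration.integrable_bound[OF integrable_phi_quartic[of a c]])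
  show "(\<lambda>g. \<phi> g * P g * (a - c * g)^4) \<in> borel_measurable lborel" by measurable
  show "AE x in lborel. norm (\<phi> x * P x * (a - c * x)^4) \<le> norm (\<phi> x * (a - c * x)^4)"
  proof (rule AE_I2)
    fix x
    have "\<bar>\<phi> x * P x * (a - c * x)^4\<bar> = \<bar>P x\<bar> * \<bar>\<phi> x * (a - c * x)^4\<bar>" by (simp add: abs_mult)
    also have "\<dots> \<le> 1 * \<bar>\<phi> x * (a - c * x)^4\<bar>" by (rule mult_right_mono[OF assms(2)]) simp
    finally show "norm (\<phi> x * P x * (a - c * x)^4) \<le> norm (\<phi> x * (a - c * x)^4)" by simp
  qed
qed

lemma first_moment:
  assumes "\<sigma> > 0" "\<gamma> > 0"
  shows "(\<integral>g. \<phi> g * (1 - pbar \<sigma> \<gamma> a g) * (a - (2 * (\<sigma> * sqrt \<gamma>)) * g) \<partial>lborel) = a"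
proof -
  define s where "s = \<sigma> * sqrt \<gamma>"
  have s: "s > 0" using assms by (simp add: s_def)
  define P where "P = pbar \<sigma> \<gamma> a"
  have Pm[measurable]: "P \<in> borel_measurable borel" unfolding P_def by measurable
  have Pb: "\<bar>P g\<bar> \<le> 1" for g using pbar_range[of \<sigma> \<gamma> a g] by (simp add: P_def)
  define f where "f g = \<phi> g * P g * (a - (2 * s) * g)" for g
  have fsym: "f (a / s + (-1) * x) = - f x" for x
  proof -
    have "\<phi> (a / s - x) * P (a / s - x) = \<phi> x * P x"
      unfolding P_def using pbar_sym[OF assms, of _ a] by (simp add: s_def min.commute)
    moreover have "a - 2 * s * (a / s - x) = - (a - 2 * s * x)" using s by (simp add: field_simps)
    ultimately have "\<phi> (a / s - x) * P (a / s - x) * (a - 2 * s * (a / s - x)) = - (\<phi> x * P x * (a - 2 * s * x))"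
      by (simp only: mult_minus_right)
    moreover have "a / s + (-1) * x = a / s - x" by simp
    ultimately show ?thesis unfolding f_def by (simp only:)
  qed
  have "(\<integral>g. f g \<partial>lborel) = \<bar>-1::real\<bar> *\<^sub>R (\<integral>x. f (a / s + (-1) * x) \<partial>lborel)"
    by (rule lborel_integral_real_affine) simp
  also have "\<dots> = (\<integral>x. - f x \<partial>lborel)" by (simp only: fsym) simp
  also have "\<dots> = - (\<integral>g. f g \<partial>lborel)" by (rule Bochner_Integration.integral_minus)
  finally have f0: "(\<integral>g. f g \<partial>lborel) = 0" by simp
  have fi: "integrable lborel f" unfolding f_def by (rule integrable_wP_lin[OF Pm Pb])
  have "(\<integral>g. \<phi> g * (1 - P g) * (a - (2 * s) * g) \<partial>lborel) = (\<integral>g. \<phi> g * (a - (2 * s) * g) - f g \<partial>lborel)"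
    by (simp add: f_def algebra_simps)
  also have "\<dots> = a - 0"
    by (subst Bochner_Integration.integral_diff[OF integrable_phi_lin fi]) (simp add: integral_phi_lin f0)
  finally show ?thesis by (simp add: P_def s_def)
qed

lemma first_abs_moment:
  assumes "\<sigma> > 0" "\<gamma> > 0"
  shows "\<bar>a\<bar> \<le> (\<integral>g. \<phi> g * (1 - pbar \<sigma> \<gamma> a g) * \<bar>a - (2 * (\<sigma> * sqrt \<gamma>)) * g\<bar> \<partial>lborel)"
proof -
  have "\<bar>a\<bar> \<le> (\<integral>g. \<bar>\<phi> g * (1 - pbar \<sigma> \<gamma> a g) * (a - (2 * (\<sigma> * sqrt \<gamma>)) * g)\<bar> \<partial>lborel)"
    using integral_abs_bound[of lborel "\<lambda>g. \<phi> g * (1 - pbar \<sigma> \<gamma> a g) * (a - (2 * (\<sigma> * sqrt \<gamma>)) * g)"]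
    by (simp only: first_moment[OF assms])
  also have "\<dots> = (\<integral>g. \<phi> g * (1 - pbar \<sigma> \<gamma> a g) * \<bar>a - (2 * (\<sigma> * sqrt \<gamma>)) * g\<bar> \<partial>lborel)"
  proof (rule Bochner_Integration.integral_cong[OF refl])
    fix g
    have "0 \<le> 1 - pbar \<sigma> \<gamma> a g" using pbar_range[of \<sigma> \<gamma> a g] by simp
    then show "\<bar>\<phi> g * (1 - pbar \<sigma> \<gamma> a g) * (a - (2 * (\<sigma> * sqrt \<gamma>)) * g)\<bar> = \<phi> g * (1 - pbar \<sigma> \<gamma> a g) * \<bar>a - (2 * (\<sigma> * sqrt \<gamma>)) * g\<bar>"
      using phi_pos[of g] by (simp add: abs_mult)
  qed
  finally show ?thesis .
qed

lemma fourth_moment: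
  shows "(\<integral>g. \<phi> g * (1 - pbar \<sigma> \<gamma> a g) * (a - c * g)^4 \<partial>lborel) \<le> a^4 + 6*a^2*c^2 + 3*c^4"
proof -
  have Pb: "\<bar>1 - pbar \<sigma> \<gamma> a g\<bar> \<le> 1" for g using pbar_range[of \<sigma> \<gamma> a g] by simp
  have "(\<integral>g. \<phi> g * (1 - pbar \<sigma> \<gamma> a g) * (a - c * g)^4 \<partial>lborel) \<le> (\<integral>g. \<phi> g * (a - c * g)^4 \<partial>lborel)"
  proof (rule integral_mono[OF integrable_wP_quartic integrable_phi_quartic])
    show "(\<lambda>g. 1 - pbar \<sigma> \<gamma> a g) \<in> borel_measurable borel" by measurable
    show "\<bar>1 - pbar \<sigma> \<gamma> a g\<bar> \<le> 1" for g by (rule Pb)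
    fix g
    have "0 \<le> pbar \<sigma> \<gamma> a g" using pbar_range[of \<sigma> \<gamma> a g] by simp
    then show "\<phi> g * (1 - pbar \<sigma> \<gamma> a g) * (a - c * g)^4 \<le> \<phi> g * (a - c * g)^4"
      using phi_pos[of g] by (simp add: mult_le_cancel_left1 algebra_simps mult_nonneg_nonneg)
  qed
  then show ?thesis by (simp only: integral_phi_quartic)
qed



lemma integrable_phi: "integrable lborel \<phi>"
  using integrable_phi_lin[of 1 0] by simp

lemma integral_phi: "(\<integral>g. \<phi> g \<partial>lborel) = 1"
  using integral_phi_lin[of 1 0] by simp

lemma step_nn:
  fixes \<kappa> :: "real \<Rightarrow> real" and w cinf \<sigma> \<gamma> M :: real
  assumes "\<sigma> > 0" "\<gamma> > 0" "M \<ge> 0"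
  defines "a \<equiv> tau \<kappa> \<gamma> w + \<gamma> * cinf"
  shows "(\<integral>\<^sup>+y. ennreal (3*M^4 - 4*M^3*\<bar>y\<bar> + 8*y^4 + 1) \<partial>Qker \<sigma> cinf \<kappa> \<gamma> w)
     \<le> ennreal (1 + 3*M^4 - 4*M^3*\<bar>a\<bar> + 8*(a^4 + 24*(\<sigma>\<^sup>2*\<gamma>)*a^2 + 48*(\<sigma>\<^sup>2*\<gamma>)^2))"
proof -
  define s where "s = \<sigma> * sqrt \<gamma>"
  have s: "s > 0" using assms by (simp add: s_def)
  have s2: "s^2 = \<sigma>\<^sup>2*\<gamma>" using assms by (simp add: s_def power_mult_distrib)
  define P where "P = pbar \<sigma> \<gamma> a"
  have Pm[measurable]: "P \<in> borel_measurable borel" unfolding P_def by measurable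
  have P01: "0 \<le> P g" "P g \<le> 1" for g using pbar_range[of \<sigma> \<gamma> a g] by (auto simp: P_def)
  have Pb: "\<bar>1 - P g\<bar> \<le> 1" for g using P01[of g] by simp
  define h where "h g = a - (2 * s) * g" for g
  define R where "R y = 3*M^4 - 4*M^3*\<bar>y\<bar> + 8*y^4 + 1" for y :: real
  have Rpos: "0 \<le> R y" for y
  proof -
    have "0 \<le> M^4" using \<open>M \<ge> 0\<close> by simp
    moreover have "\<bar>y\<bar>^4 = y^4" by (simp add: power_even_abs_numeral)
    ultimately show ?thesis using poly_lower[of M "\<bar>y\<bar>"] unfolding R_def by linarith
  qed
  define F where "F g = \<phi> g * (1 + 3*M^4) - 4*M^3 * (\<phi> g * (1 - P g) * \<bar>h g\<bar>) + 8 * (\<phi> g * (1 - P g) * (h g)^4)" for g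
  have Feq: "F g = \<phi> g * (P g * R 0 + (1 - P g) * R (h g))" for g
    by (simp add: F_def R_def algebra_simps)
  have Fpos: "0 \<le> F g" for g unfolding Feq using P01[of g] phi_pos[of g] Rpos
    by (intro mult_nonneg_nonneg add_nonneg_nonneg) auto
  have i1: "integrable lborel (\<lambda>g. \<phi> g * (1 - P g) * \<bar>h g\<bar>)"
  proof -
    have "integrable lborel (\<lambda>g. \<bar>\<phi> g * (1 - P g) * (a - (2 * s) * g)\<bar>)"
      by (intro Bochner_Integration.integrable_abs integrable_wP_lin Pb) measurable
    moreover have "\<bar>\<phi> g * (1 - P g) * (a - (2 * s) * g)\<bar> = \<phi> g * (1 - P g) * \<bar>h g\<bar>" for g
      using P01[of g] phi_pos[of g] by (simp add: abs_mult h_def)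
    ultimately show ?thesis by simp
  qed
  have i4: "integrable lborel (\<lambda>g. \<phi> g * (1 - P g) * (h g)^4)"
    unfolding h_def by (intro integrable_wP_quartic Pb) measurable
  have Fi: "integrable lborel F"
    unfolding F_def by (intro Bochner_Integration.integrable_diff Bochner_Integration.integrable_add
      Bochner_Integration.integrable_mult_right Bochner_Integration.integrable_mult_left integrable_phi i1 i4)
  have I1: "\<bar>a\<bar> \<le> (\<integral>g. \<phi> g * (1 - P g) * \<bar>h g\<bar> \<partial>lborel)"
    using first_abs_moment[OF assms(1,2), of a] by (simp add: P_def h_def s_def)
  have I4: "(\<integral>g. \<phi> g * (1 - P g) * (h g)^4 \<partial>lborel) \<le> a^4 + 6*a^2*(2 * s)^2 + 3*(2 * s)^4"
    using fourth_moment[of \<sigma> \<gamma> a "2 * s"] by (simp add: P_def h_def)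
  have intF: "(\<integral>g. F g \<partial>lborel) = (1 + 3*M^4) - 4*M^3 * (\<integral>g. \<phi> g * (1 - P g) * \<bar>h g\<bar> \<partial>lborel)
      + 8 * (\<integral>g. \<phi> g * (1 - P g) * (h g)^4 \<partial>lborel)"
    unfolding F_def
    by (simp add: Bochner_Integration.integral_diff Bochner_Integration.integral_add
      Bochner_Integration.integrable_diff Bochner_Integration.integrable_add i1 i4 integrable_phi integral_phi)
  have M3: "0 \<le> 4*M^3" using \<open>M \<ge> 0\<close> by simp
  have "(\<integral>g. F g \<partial>lborel) \<le> (1 + 3*M^4) - 4*M^3 * \<bar>a\<bar> + 8 * (a^4 + 6*a^2*(2 * s)^2 + 3*(2 * s)^4)"
  proof -
    have gen: "\<And>x y u v c::real. y \<le> x \<Longrightarrow> u \<le> v \<Longrightarrow> c - x + 8 * u \<le> c - y + 8 * v" by linarith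
    show ?thesis unfolding intF by (rule gen[OF mult_left_mono[OF I1 M3] I4])
  qed
  also have "\<dots> = 1 + 3*M^4 - 4*M^3*\<bar>a\<bar> + 8*(a^4 + 24*(\<sigma>\<^sup>2*\<gamma>)*a^2 + 48*(\<sigma>\<^sup>2*\<gamma>)^2)"
  proof -
    have q2: "(2 * s)^2 = 4*(\<sigma>\<^sup>2*\<gamma>)" using s2 by (simp add: power_mult_distrib)
    have q4: "(2 * s)^4 = 16*(\<sigma>\<^sup>2*\<gamma>)^2"
    proof -
      have "(2 * s)^4 = ((2 * s)^2)^2" by simp
      then show ?thesis unfolding q2 by (simp add: power_mult_distrib)
    qed
    show ?thesis unfolding q2 q4 by (simp add: algebra_simps)
  qed
  finally have Fle: "(\<integral>g. F g \<partial>lborel) \<le> 1 + 3*M^4 - 4*M^3*\<bar>a\<bar> + 8*(a^4 + 24*(\<sigma>\<^sup>2*\<gamma>)*a^2 + 48*(\<sigma>\<^sup>2*\<gamma>)^2)" .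
  have Rm[measurable]: "(\<lambda>y. ennreal (R y)) \<in> borel_measurable borel" unfolding R_def by measurable
  have "(\<integral>\<^sup>+y. ennreal (R y) \<partial>Qker \<sigma> cinf \<kappa> \<gamma> w)
      = (\<integral>\<^sup>+g. ennreal (\<phi> g) * (ennreal (P g) * ennreal (R 0) + ennreal (1 - P g) * ennreal (R (h g))) \<partial>lborel)"
    by (subst Qker_nn[OF Rm]) (simp add: P_def h_def a_def s_def mult.assoc)
  also have "\<dots> = (\<integral>\<^sup>+g. ennreal (F g) \<partial>lborel)"
  proof (rule nn_integral_cong)
    fix g
    show "ennreal (\<phi> g) * (ennreal (P g) * ennreal (R 0) + ennreal (1 - P g) * ennreal (R (h g))) = ennreal (F g)"
    proof -
      have a1: "0 \<le> P g * R 0" "0 \<le> (1 - P g) * R (h g)" "0 \<le> 1 - P g" "0 \<le> \<phi> g"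
        using P01[of g] phi_pos[of g] Rpos[of 0] Rpos[of "h g"] by auto
      have "ennreal (F g) = ennreal (\<phi> g) * ennreal (P g * R 0 + (1 - P g) * R (h g))"
        unfolding Feq by (rule ennreal_mult) (use a1 in auto)
      also have "\<dots> = ennreal (\<phi> g) * (ennreal (P g * R 0) + ennreal ((1 - P g) * R (h g)))"
        by (subst ennreal_plus[OF a1(1,2)]) (rule refl)
      also have "\<dots> = ennreal (\<phi> g) * (ennreal (P g) * ennreal (R 0) + ennreal (1 - P g) * ennreal (R (h g)))"
        by (simp only: ennreal_mult[OF P01(1) Rpos] ennreal_mult[OF a1(3) Rpos])
      finally show ?thesis by (rule sym)
    qed
  qed
  also have "\<dots> = ennreal (\<integral>g. F g \<partial>lborel)"
    by (rule nn_integral_eq_integral[OF Fi]) (simp add: Fpos)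
  also have "\<dots> \<le> ennreal (1 + 3*M^4 - 4*M^3*\<bar>a\<bar> + 8*(a^4 + 24*(\<sigma>\<^sup>2*\<gamma>)*a^2 + 48*(\<sigma>\<^sup>2*\<gamma>)^2))"
    by (rule ennreal_leI[OF Fle])
  finally show ?thesis by (simp add: R_def)
qed



definition Kc :: "real \<Rightarrow> real \<Rightarrow> real \<Rightarrow> real \<Rightarrow> real" where
  "Kc L c \<sigma> gb = 16 * (4 * (L+c) + 32 * (L+c) * (1 + gb * (L+c))^3 + 192 * \<sigma>\<^sup>2 * (1 + gb * (L+c))^2 + 384 * \<sigma>^4 * gb)"

lemma Kc_nonneg: "0 \<le> L \<Longrightarrow> 0 \<le> c \<Longrightarrow> 0 \<le> gb \<Longrightarrow> 0 \<le> Kc L c \<sigma> gb"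
  unfolding Kc_def by (intro mult_nonneg_nonneg add_nonneg_nonneg) auto

lemma pow_le_1_4:
  fixes M :: real assumes "0 \<le> M" "k \<le> 4" shows "M^k \<le> 1 + M^4"
proof (cases "M \<le> 1")
  case True
  then have "M^k \<le> 1" using assms by (intro power_le_one) auto
  moreover have "0 \<le> M^4" using assms by simp
  ultimately show ?thesis by linarith
next
  case False
  then have "M^k \<le> M^4" using assms by (intro power_increasing) auto
  then show ?thesis by linarith
qed

lemma lin15: "(a::real) \<le> 1 + X \<Longrightarrow> b \<le> 1 + X \<Longrightarrow> c \<le> 1 + X \<Longrightarrow> 1 + 4 * a + 6 * b + 4 * c + X \<le> 15 * (1 + X)"
  by simp

lemma step_real:
  fixes L c \<sigma> \<gamma> gb M u x :: real
  assumes L: "0 \<le> L" and c: "0 \<le> c" and g: "0 < \<gamma>" "\<gamma> \<le> gb"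
    and M: "0 \<le> M" and u: "0 \<le> u" "u \<le> M"
    and xl: "u - \<gamma> * (L * u + c) \<le> x" and xu: "x \<le> u + \<gamma> * (L * u + c)" and x0: "0 \<le> x"
  shows "1 + 3 * M^4 - 4 * M^3 * x + 8 * (x^4 + 24 * (\<sigma>\<^sup>2 * \<gamma>) * x^2 + 48 * (\<sigma>\<^sup>2 * \<gamma>)^2)
     \<le> (1 + \<gamma> * Kc L c \<sigma> gb) * (3 * M^4 - 4 * M^3 * u + 8 * u^4 + 1)"
proof -
  define v where "v = L * u + c"
  define y where "y = u + \<gamma> * v"
  define P where "P = 1 + M"
  define D where "D = 1 + gb * (L+c)"
  define K0 where "K0 = 4 * (L+c) + 32 * (L+c) * D^3 + 192 * \<sigma>\<^sup>2 * D^2 + 384 * \<sigma>^4 * gb"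
  have K: "Kc L c \<sigma> gb = 16 * K0" unfolding Kc_def K0_def D_def ..
  have gb: "0 \<le> gb" using g by simp
  have v0: "0 \<le> v" unfolding v_def using L c u by simp
  have gv0: "0 \<le> \<gamma> * v" using g v0 by simp
  have P1: "1 \<le> P" unfolding P_def using M by simp
  have P0: "0 \<le> P" using P1 by simp
  have D0: "0 \<le> D" unfolding D_def using gb L c by simp
  have Lc0: "0 \<le> L + c" using L c by simp
  have xy: "x \<le> y" using xu unfolding y_def v_def .
  have uy: "u \<le> y" using gv0 unfolding y_def by simp
  have y0: "0 \<le> y" using u uy by simp
  have vP: "v \<le> (L+c) * P"
  proof -
    have "L * u \<le> L * M" using mult_left_mono[OF u(2) L] .
    moreover have e: "(L+c) * (1+M) = L + L * M + c + M * c" by (simp add: algebra_simps)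
    ultimately show ?thesis unfolding v_def P_def using L mult_nonneg_nonneg[OF M c] by linarith
  qed
  have yDP: "y \<le> D * P"
  proof -
    have "\<gamma> * v \<le> gb * ((L+c) * P)" by (rule mult_mono[OF g(2) vP gb v0])
    moreover have "M + gb * ((L+c) * P) \<le> D * P" unfolding D_def P_def using gb Lc0 M
      by (simp add: algebra_simps)
    ultimately show ?thesis unfolding y_def using u by simp
  qed
  have MP: "M \<le> P" unfolding P_def by simp
  have i: "4 * M^3 * u - 4 * M^3 * x \<le> \<gamma> * (4 * (L+c) * P^4)"
  proof -
    have "4 * M^3 * u - 4 * M^3 * x = 4 * M^3 * (u - x)" by (simp add: algebra_simps)
    also have "\<dots> \<le> 4 * M^3 * (\<gamma> * v)" using xl M unfolding v_def by (intro mult_left_mono) auto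
    also have "\<dots> \<le> 4 * P^3 * (\<gamma> * ((L+c) * P))"
      using M gv0 g vP v0 P0 by (intro mult_mono mult_left_mono power_mono MP) auto
    also have "\<dots> = \<gamma> * (4 * (L+c) * P^4)" by (simp add: algebra_simps power_numeral_reduce)
    finally show ?thesis .
  qed
  have ii: "x^4 - u^4 \<le> \<gamma> * (4 * (L+c) * D^3 * P^4)"
  proof -
    have "x^4 \<le> y^4" by (rule power_mono[OF xy x0])
    moreover have "y^4 - u^4 = (y - u) * (y^3 + y^2 * u + y * u^2 + u^3)"
      by (simp add: algebra_simps power_numeral_reduce)
    moreover have "y^3 + y^2 * u + y * u^2 + u^3 \<le> 4 * y^3"
    proof -
      have "y^2 * u \<le> y^2 * y" by (rule mult_left_mono[OF uy]) simp
      moreover have "y * u^2 \<le> y * y^2" by (intro mult_left_mono power_mono uy u y0)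
      moreover have "u^3 \<le> y^3" by (intro power_mono uy u)
      ultimately show ?thesis by (simp add: power_numeral_reduce)
    qed
    moreover have "y - u = \<gamma> * v" unfolding y_def by simp
    ultimately have "x^4 - u^4 \<le> (\<gamma> * v) * (4 * y^3)"
      using mult_left_mono[of "y^3 + y^2 * u + y * u^2 + u^3" "4 * y^3" "\<gamma> * v"] gv0 by simp
    also have "\<dots> \<le> (\<gamma> * ((L+c) * P)) * (4 * (D * P)^3)"
    proof -
      have a: "\<gamma> * v \<le> \<gamma> * ((L+c) * P)" by (rule mult_left_mono[OF vP]) (use g in simp)
      have b: "4 * y^3 \<le> 4 * (D * P)^3" using power_mono[OF yDP y0, of 3] by simp
      have c: "0 \<le> \<gamma> * ((L+c) * P)" using g Lc0 P0 by simp
      have d: "0 \<le> 4 * y^3" using y0 by simp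
      show ?thesis by (rule mult_mono[OF a b c d])
    qed
    also have "\<dots> = \<gamma> * (4 * (L+c) * D^3 * P^4)" by (simp add: algebra_simps power_numeral_reduce)
    finally show ?thesis .
  qed
  have iii: "(\<sigma>\<^sup>2 * \<gamma>) * x^2 \<le> \<gamma> * (\<sigma>\<^sup>2 * D^2 * P^4)"
  proof -
    have "x^2 \<le> (D * P)^2" using xy yDP x0 by (intro power_mono) auto
    also have "\<dots> = D^2 * P^2" by (simp add: power_mult_distrib)
    also have "\<dots> \<le> D^2 * P^4"
    proof -
      have "P^2 \<le> P^4" using P1 by (intro power_increasing) auto
      then show ?thesis by (rule mult_left_mono) simp
    qed
    finally have "x^2 \<le> D^2 * P^4" .
    then have "(\<sigma>\<^sup>2 * \<gamma>) * x^2 \<le> (\<sigma>\<^sup>2 * \<gamma>) * (D^2 * P^4)" using g by (intro mult_left_mono) auto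
    then show ?thesis by (simp add: algebra_simps)
  qed
  have iv: "(\<sigma>\<^sup>2 * \<gamma>)^2 \<le> \<gamma> * (\<sigma>^4 * gb * P^4)"
  proof -
    have "(\<sigma>\<^sup>2 * \<gamma>)^2 = \<gamma> * (\<sigma>^4 * \<gamma>)" by (simp add: power_mult_distrib power2_eq_square power4_eq_xxxx)
    also have "\<dots> \<le> \<gamma> * (\<sigma>^4 * gb * 1)"
    proof -
      have "0 \<le> \<sigma>^4" by (simp add: zero_le_even_power)
      then have "\<sigma>^4 * \<gamma> \<le> \<sigma>^4 * gb" using g by (intro mult_left_mono) auto
      then show ?thesis using g by (intro mult_left_mono) auto
    qed
    also have "\<dots> \<le> \<gamma> * (\<sigma>^4 * gb * P^4)" using g gb P1
      by (intro mult_left_mono) (auto simp: one_le_power)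
    finally show ?thesis .
  qed
  have ux: "x^4 = u^4 + (x^4 - u^4)" by simp
  have "1 + 3 * M^4 - 4 * M^3 * x + 8 * (x^4 + 24 * (\<sigma>\<^sup>2 * \<gamma>) * x^2 + 48 * (\<sigma>\<^sup>2 * \<gamma>)^2)
      = (3 * M^4 - 4 * M^3 * u + 8 * u^4 + 1) + (4 * M^3 * u - 4 * M^3 * x) + 8 * (x^4 - u^4) + 192 * ((\<sigma>\<^sup>2 * \<gamma>) * x^2) + 384 * (\<sigma>\<^sup>2 * \<gamma>)^2"
    by (simp add: algebra_simps)
  also have "\<dots> \<le> (3 * M^4 - 4 * M^3 * u + 8 * u^4 + 1) + \<gamma> * (K0 * P^4)"
    using i ii iii iv unfolding K0_def by (simp add: algebra_simps)
  also have "\<dots> \<le> (3 * M^4 - 4 * M^3 * u + 8 * u^4 + 1) + \<gamma> * (16 * K0 * (3 * M^4 - 4 * M^3 * u + 8 * u^4 + 1))"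
  proof -
    have "P^4 \<le> 16 * (1 + M^4)"
    proof -
      have Pe: "P^4 = 1 + 4 * M + 6 * M^2 + 4 * M^3 + M^4" unfolding P_def by (simp add: algebra_simps power_numeral_reduce)
      have "M \<le> 1 + M^4" "M^2 \<le> 1 + M^4" "M^3 \<le> 1 + M^4"
      proof -
        show "M \<le> 1 + M^4" using pow_le_1_4[OF M, of 1] by simp
        show "M^2 \<le> 1 + M^4" using pow_le_1_4[OF M, of 2] by simp
        show "M^3 \<le> 1 + M^4" using pow_le_1_4[OF M, of 3] by simp
      qed
      then have "P^4 \<le> 15 * (1 + M^4)" unfolding Pe by (rule lin15)
      also have "\<dots> \<le> 16 * (1 + M^4)" by (rule mult_right_mono) (use M in auto)
      finally show ?thesis .
    qed
    also have "\<dots> \<le> 16 * (3 * M^4 - 4 * M^3 * u + 8 * u^4 + 1)" using poly_lower[of M u] by simp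
    finally have "P^4 \<le> 16 * (3 * M^4 - 4 * M^3 * u + 8 * u^4 + 1)" .
    moreover have "0 \<le> K0" unfolding K0_def using Lc0 D0 gb L c by (intro add_nonneg_nonneg mult_nonneg_nonneg) auto
    ultimately have "K0 * P^4 \<le> K0 * (16 * (3 * M^4 - 4 * M^3 * u + 8 * u^4 + 1))" by (intro mult_left_mono)
    then have "\<gamma> * (K0 * P^4) \<le> \<gamma> * (K0 * (16 * (3 * M^4 - 4 * M^3 * u + 8 * u^4 + 1)))"
      by (rule mult_left_mono) (use g in auto)
    then have "\<gamma> * (K0 * P^4) \<le> \<gamma> * (16 * K0 * (3 * M^4 - 4 * M^3 * u + 8 * u^4 + 1))"
      by (simp only: ac_simps)
    then show ?thesis by (rule add_left_mono)
  qed
  also have "\<dots> = (1 + \<gamma> * Kc L c \<sigma> gb) * (3 * M^4 - 4 * M^3 * u + 8 * u^4 + 1)"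
    unfolding K by (simp add: algebra_simps)
  finally show ?thesis .
qed



lemma a_bounds:
  fixes \<kappa> :: "real \<Rightarrow> real"
  assumes lip: "L-lipschitz_on {0..} \<kappa>" and k0: "\<kappa> 0 = 0" and g: "0 < \<gamma>" and c: "0 \<le> c"
  shows "\<bar>w\<bar> - \<gamma> * (L * \<bar>w\<bar> + c) \<le> \<bar>tau \<kappa> \<gamma> w + \<gamma> * c\<bar>"
    and "\<bar>tau \<kappa> \<gamma> w + \<gamma> * c\<bar> \<le> \<bar>w\<bar> + \<gamma> * (L * \<bar>w\<bar> + c)"
proof -
  have L: "0 \<le> L" using lip by (simp add: lipschitz_on_def)
  have kb: "\<bar>\<kappa> (max 0 w)\<bar> \<le> L * \<bar>w\<bar>"
  proof (cases "0 \<le> w")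
    case True
    have "\<forall>x\<in>{0..}. \<forall>y\<in>{0..}. dist (\<kappa> x) (\<kappa> y) \<le> L * dist x y" using lip by (simp add: lipschitz_on_def)
    then have "dist (\<kappa> w) (\<kappa> 0) \<le> L * dist w 0" using True by blast
    then show ?thesis using True k0 by (simp add: dist_real_def max_def)
  next
    case False
    then show ?thesis using k0 L by (simp add: max_def mult_nonneg_nonpos)
  qed
  have gk: "\<bar>\<gamma> * \<kappa> (max 0 w)\<bar> \<le> \<gamma> * (L * \<bar>w\<bar>)"
    using mult_left_mono[OF kb, of \<gamma>] g by (simp add: abs_mult)
  have gc: "0 \<le> \<gamma> * c" using g c by simp
  have gLw: "0 \<le> \<gamma> * (L * \<bar>w\<bar>)" using g L by simp
  show "\<bar>tau \<kappa> \<gamma> w + \<gamma> * c\<bar> \<le> \<bar>w\<bar> + \<gamma> * (L * \<bar>w\<bar> + c)"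
    unfolding tau_def using gk gc by (simp add: distrib_left abs_triangle_ineq[THEN order_trans] )
  show "\<bar>w\<bar> - \<gamma> * (L * \<bar>w\<bar> + c) \<le> \<bar>tau \<kappa> \<gamma> w + \<gamma> * c\<bar>"
  proof (cases "0 \<le> w")
    case True
    then show ?thesis unfolding tau_def using gk gc gLw by (simp add: distrib_left)
  next
    case False
    have t: "tau \<kappa> \<gamma> w = w" unfolding tau_def using False k0 by (simp add: max_def)
    have "\<bar>w\<bar> - \<gamma> * (L * \<bar>w\<bar> + c) \<le> -(w + \<gamma> * c)" using gLw False by (simp add: distrib_left right_diff_distrib)
    also have "\<dots> \<le> \<bar>w + \<gamma> * c\<bar>" by simp
    finally show ?thesis unfolding t .
  qed
qed

lemma step_full:
  fixes \<kappa> :: "real \<Rightarrow> real"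
  assumes s: "\<sigma> > 0" and g: "0 < \<gamma>" "\<gamma> \<le> gb" and c: "0 \<le> cinf"
    and lip: "L-lipschitz_on {0..} \<kappa>" and k0: "\<kappa> 0 = 0" and M: "0 \<le> M" "\<bar>w\<bar> \<le> M"
  shows "(\<integral>\<^sup>+y. ennreal (3 * (max M \<bar>y\<bar>)^4 - 4 * (max M \<bar>y\<bar>)^3 * \<bar>y\<bar> + 8 * y^4 + 1) \<partial>Qker \<sigma> cinf \<kappa> \<gamma> w)
     \<le> ennreal ((1 + \<gamma> * Kc L cinf \<sigma> gb) * (3 * M^4 - 4 * M^3 * \<bar>w\<bar> + 8 * w^4 + 1))"
proof -
  have L: "0 \<le> L" using lip by (simp add: lipschitz_on_def)
  define a where "a = tau \<kappa> \<gamma> w + \<gamma> * cinf"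
  have "(\<integral>\<^sup>+y. ennreal (3 * (max M \<bar>y\<bar>)^4 - 4 * (max M \<bar>y\<bar>)^3 * \<bar>y\<bar> + 8 * y^4 + 1) \<partial>Qker \<sigma> cinf \<kappa> \<gamma> w)
      \<le> (\<integral>\<^sup>+y. ennreal (3 * M^4 - 4 * M^3 * \<bar>y\<bar> + 8 * y^4 + 1) \<partial>Qker \<sigma> cinf \<kappa> \<gamma> w)"
  proof (rule nn_integral_mono)
    fix y :: real
    have "\<bar>y\<bar>^4 = y^4" by (simp add: power_even_abs_numeral)
    then show "ennreal (3 * (max M \<bar>y\<bar>)^4 - 4 * (max M \<bar>y\<bar>)^3 * \<bar>y\<bar> + 8 * y^4 + 1)
        \<le> ennreal (3 * M^4 - 4 * M^3 * \<bar>y\<bar> + 8 * y^4 + 1)"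
      using poly_step[OF M(1), of "\<bar>y\<bar>"] by (intro ennreal_leI) simp
  qed
  also have "\<dots> \<le> ennreal (1 + 3 * M^4 - 4 * M^3 * \<bar>a\<bar> + 8 * (a^4 + 24 * (\<sigma>\<^sup>2 * \<gamma>) * a^2 + 48 * (\<sigma>\<^sup>2 * \<gamma>)^2))"
    unfolding a_def by (rule step_nn[OF s g(1) M(1)])
  also have "\<dots> \<le> ennreal ((1 + \<gamma> * Kc L cinf \<sigma> gb) * (3 * M^4 - 4 * M^3 * \<bar>w\<bar> + 8 * \<bar>w\<bar>^4 + 1))"
  proof (rule ennreal_leI)
    have a4: "a^4 = \<bar>a\<bar>^4" "a^2 = \<bar>a\<bar>^2" by (simp_all add: power_even_abs_numeral)
    show "1 + 3 * M^4 - 4 * M^3 * \<bar>a\<bar> + 8 * (a^4 + 24 * (\<sigma>\<^sup>2 * \<gamma>) * a^2 + 48 * (\<sigma>\<^sup>2 * \<gamma>)^2)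
        \<le> (1 + \<gamma> * Kc L cinf \<sigma> gb) * (3 * M^4 - 4 * M^3 * \<bar>w\<bar> + 8 * \<bar>w\<bar>^4 + 1)"
      unfolding a4
      by (rule step_real[OF L c g M(1) abs_ge_zero M(2)])
         (use a_bounds[OF lip k0 g(1) c, of w] in \<open>simp_all add: a_def\<close>)
  qed
  also have "\<bar>w\<bar>^4 = w^4" by (simp add: power_even_abs_numeral)
  finally show ?thesis .
qed



primrec mx :: "nat \<Rightarrow> (nat \<Rightarrow> real) \<Rightarrow> real" where
  "mx 0 \<omega> = \<bar>\<omega> 0\<bar>"
| "mx (Suc k) \<omega> = max (mx k \<omega>) \<bar>\<omega> (Suc k)\<bar>"

definition Phi :: "nat \<Rightarrow> (nat \<Rightarrow> real) \<Rightarrow> real" where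
  "Phi k \<omega> = 3 * (mx k \<omega>)^4 - 4 * (mx k \<omega>)^3 * \<bar>\<omega> k\<bar> + 8 * (\<omega> k)^4 + 1"

lemma mx_nonneg: "0 \<le> mx k \<omega>"
  by (induction k) auto

lemma mx_ge: "j \<le> k \<Longrightarrow> \<bar>\<omega> j\<bar> \<le> mx k \<omega>"
proof (induction k)
  case 0 then show ?case by simp
next
  case (Suc k)
  then show ?case by (cases "j = Suc k") (auto simp: le_Suc_eq max_def)
qed

lemma mx_upd: "k < j \<Longrightarrow> mx k (fun_upd \<omega> j y) = mx k \<omega>"
  by (induction k) auto

lemma mx_meas[measurable]: "mx k \<in> borel_measurable seq_space"
  by (induction k) auto

lemma Phi_meas[measurable]: "Phi k \<in> borel_measurable seq_space"
  unfolding Phi_def by measurable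

lemma Phi_ge: "(mx k \<omega>)^4 + 1 \<le> Phi k \<omega>"
proof -
  have "\<bar>\<omega> k\<bar>^4 = (\<omega> k)^4" by (simp add: power_even_abs_numeral)
  then show ?thesis using poly_lower[of "mx k \<omega>" "\<bar>\<omega> k\<bar>"] unfolding Phi_def by simp
qed

lemma Phi_pos: "0 \<le> Phi k \<omega>"
  using Phi_ge[of k \<omega>] mx_nonneg[of k \<omega>]
  by (smt (verit) zero_le_power)

lemma kern_meas:
  assumes Q: "Q \<in> borel \<rightarrow>\<^sub>M prob_algebra borel"
  shows "(\<lambda>\<omega>. distr (Q (\<omega> k)) seq_space (\<lambda>y. fun_upd \<omega> (Suc k) y)) \<in> seq_space \<rightarrow>\<^sub>M prob_algebra seq_space"
proof (rule measurable_distr_prob_space2)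
  show "(\<lambda>\<omega>. Q (\<omega> k)) \<in> seq_space \<rightarrow>\<^sub>M prob_algebra borel"
    using Q by measurable
  have "(\<lambda>(f, y). fun_upd f (Suc k) y) \<in> (seq_space \<Otimes>\<^sub>M borel) \<rightarrow>\<^sub>M Pi\<^sub>M (insert (Suc k) UNIV) (\<lambda>_. borel :: real measure)"
    by (rule measurable_add_dim)
  then show "(\<lambda>(\<omega>, y). fun_upd \<omega> (Suc k) y) \<in> (seq_space \<Otimes>\<^sub>M borel) \<rightarrow>\<^sub>M seq_space"
    by simp
qed

lemma chain_space:
  assumes Q: "Q \<in> borel \<rightarrow>\<^sub>M prob_algebra borel"
  shows "chain_law Q w0 k \<in> space (prob_algebra seq_space)"
proof (induction k)
  case 0
  show ?case by (simp add: space_prob_algebra prob_space_return space_PiM)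
next
  case (Suc k)
  have K: "(\<lambda>\<omega>. distr (Q (\<omega> k)) seq_space (\<lambda>y. fun_upd \<omega> (Suc k) y)) \<in> seq_space \<rightarrow>\<^sub>M prob_algebra seq_space"
    by (rule kern_meas[OF Q])
  show ?case
    using prob_space_bind'[OF Suc K] sets_bind'[OF Suc K] by (simp add: space_prob_algebra)
qed

lemma chain_nn:
  assumes Q: "Q \<in> borel \<rightarrow>\<^sub>M prob_algebra borel" and f: "f \<in> borel_measurable seq_space"
  shows "(\<integral>\<^sup>+\<omega>. f \<omega> \<partial>chain_law Q w0 (Suc k)) = (\<integral>\<^sup>+\<omega>. (\<integral>\<^sup>+y. f (fun_upd \<omega> (Suc k) y) \<partial>Q (\<omega> k)) \<partial>chain_law Q w0 k)"
proof -
  have sp: "chain_law Q w0 k \<in> space (prob_algebra seq_space)" by (rule chain_space[OF Q])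
  then have se: "sets (chain_law Q w0 k) = sets seq_space" by (simp add: space_prob_algebra)
  have K: "(\<lambda>\<omega>. distr (Q (\<omega> k)) seq_space (\<lambda>y. fun_upd \<omega> (Suc k) y)) \<in> chain_law Q w0 k \<rightarrow>\<^sub>M subprob_algebra seq_space"
    using measurable_prob_algebraD[OF kern_meas[OF Q]] by (simp cong: measurable_cong_sets[OF se refl])
  have "(\<integral>\<^sup>+\<omega>. f \<omega> \<partial>chain_law Q w0 (Suc k)) = (\<integral>\<^sup>+\<omega>. (\<integral>\<^sup>+x. f x \<partial>distr (Q (\<omega> k)) seq_space (\<lambda>y. fun_upd \<omega> (Suc k) y)) \<partial>chain_law Q w0 k)"
    by (simp add: nn_integral_bind[OF f K])
  also have "\<dots> = (\<integral>\<^sup>+\<omega>. (\<integral>\<^sup>+y. f (fun_upd \<omega> (Suc k) y) \<partial>Q (\<omega> k)) \<partial>chain_law Q w0 k)"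
  proof (rule nn_integral_cong)
    fix \<omega>
    have Qs: "sets (Q (\<omega> k)) = sets borel"
      using measurable_space[OF Q, of "\<omega> k"] by (simp add: space_prob_algebra)
    have m: "(\<lambda>y. fun_upd \<omega> (Suc k) y) \<in> Q (\<omega> k) \<rightarrow>\<^sub>M seq_space"
      unfolding measurable_cong_sets[OF Qs refl]
      by (rule measurable_fun_upd[where J=UNIV and f="\<lambda>_. \<omega>" and h="\<lambda>y. y", simplified]) (auto simp: space_PiM)
    show "(\<integral>\<^sup>+x. f x \<partial>distr (Q (\<omega> k)) seq_space (\<lambda>y. fun_upd \<omega> (Suc k) y)) = (\<integral>\<^sup>+y. f (fun_upd \<omega> (Suc k) y) \<partial>Q (\<omega> k))"
      by (rule nn_integral_distr[OF m]) (simp add: f)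
  qed
  finally show ?thesis .
qed



lemma Phi_upd: "Phi (Suc k) (fun_upd \<omega> (Suc k) y) =
   3 * (max (mx k \<omega>) \<bar>y\<bar>)^4 - 4 * (max (mx k \<omega>) \<bar>y\<bar>)^3 * \<bar>y\<bar> + 8 * y^4 + 1"
  unfolding Phi_def by (simp add: mx_upd)

lemma chain_bound:
  assumes Q: "Q \<in> borel \<rightarrow>\<^sub>M prob_algebra borel" and B: "0 \<le> B"
    and step: "\<And>\<omega> k. (\<integral>\<^sup>+y. ennreal (Phi (Suc k) (fun_upd \<omega> (Suc k) y)) \<partial>Q (\<omega> k)) \<le> ennreal (B * Phi k \<omega>)"
  shows "(\<integral>\<^sup>+\<omega>. ennreal (Phi k \<omega>) \<partial>chain_law Q w0 k) \<le> ennreal (B^k * Phi 0 (\<lambda>_. w0))"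
proof (induction k)
  case 0
  show ?case by (simp add: nn_integral_return space_PiM)
next
  case (Suc k)
  have "(\<integral>\<^sup>+\<omega>. ennreal (Phi (Suc k) \<omega>) \<partial>chain_law Q w0 (Suc k))
      = (\<integral>\<^sup>+\<omega>. (\<integral>\<^sup>+y. ennreal (Phi (Suc k) (fun_upd \<omega> (Suc k) y)) \<partial>Q (\<omega> k)) \<partial>chain_law Q w0 k)"
    by (rule chain_nn[OF Q]) measurable
  also have "\<dots> \<le> (\<integral>\<^sup>+\<omega>. ennreal B * ennreal (Phi k \<omega>) \<partial>chain_law Q w0 k)"
    by (rule nn_integral_mono) (simp add: step ennreal_mult[symmetric] B Phi_pos)
  also have "\<dots> = ennreal B * (\<integral>\<^sup>+\<omega>. ennreal (Phi k \<omega>) \<partial>chain_law Q w0 k)"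
  proof (rule nn_integral_cmult)
    have se: "sets (chain_law Q w0 k) = sets seq_space"
      using chain_space[OF Q, of w0 k] by (simp add: space_prob_algebra)
    show "(\<lambda>\<omega>. ennreal (Phi k \<omega>)) \<in> borel_measurable (chain_law Q w0 k)"
      unfolding measurable_cong_sets[OF se refl] by measurable
  qed
  also have "\<dots> \<le> ennreal B * ennreal (B^k * Phi 0 (\<lambda>_. w0))"
    by (rule mult_left_mono[OF Suc]) simp
  also have "\<dots> = ennreal (B^Suc k * Phi 0 (\<lambda>_. w0))"
    by (simp add: ennreal_mult[symmetric] B Phi_pos mult.assoc)
  finally show ?case .
qed

lemma interp_bound:
  assumes g: "0 < \<gamma>" and t: "0 \<le> t" "t \<le> T"
  shows "\<bar>interp \<gamma> \<omega> t\<bar> \<le> mx (nat \<lceil>T / \<gamma>\<rceil>) \<omega>"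
proof -
  define i where "i = nat \<lfloor>t / \<gamma>\<rfloor>"
  define j where "j = nat \<lceil>t / \<gamma>\<rceil>"
  define \<theta> where "\<theta> = t / \<gamma> - of_int \<lfloor>t / \<gamma>\<rfloor>"
  define M where "M = mx (nat \<lceil>T / \<gamma>\<rceil>) \<omega>"
  have th: "0 \<le> \<theta>" "\<theta> \<le> 1" unfolding \<theta>_def by linarith+
  have "t / \<gamma> \<le> T / \<gamma>" using t g by (intro divide_right_mono) auto
  then have jN: "j \<le> nat \<lceil>T / \<gamma>\<rceil>" unfolding j_def by (intro nat_mono ceiling_mono)
  have ij: "i \<le> j" unfolding i_def j_def by (intro nat_mono) (meson floor_le_ceiling)
  have wi: "\<bar>\<omega> i\<bar> \<le> M" unfolding M_def using ij jN by (intro mx_ge) simp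
  have wj: "\<bar>\<omega> j\<bar> \<le> M" unfolding M_def using jN by (intro mx_ge) simp
  have "interp \<gamma> \<omega> t = (1 - \<theta>) * \<omega> i + \<theta> * \<omega> j"
    unfolding interp_def i_def j_def \<theta>_def by (simp add: algebra_simps)
  also have "\<bar>\<dots>\<bar> \<le> \<bar>(1 - \<theta>) * \<omega> i\<bar> + \<bar>\<theta> * \<omega> j\<bar>"
    by (rule abs_triangle_ineq)
  also have "\<dots> = (1 - \<theta>) * \<bar>\<omega> i\<bar> + \<theta> * \<bar>\<omega> j\<bar>"
    using th by (simp add: abs_mult)
  also have "\<dots> \<le> (1 - \<theta>) * M + \<theta> * M"
    using th wi wj by (intro add_mono mult_left_mono) auto
  finally show ?thesis by (simp add: M_def algebra_simps)
qed

theorem proposition16: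
  fixes \<sigma> \<gamma>bar cinf L\<kappa> w0 :: real and \<kappa> :: "real \<Rightarrow> real" and \<gamma> :: "nat \<Rightarrow> real"
  assumes "\<sigma> > 0" and "\<gamma>bar > 0" and "cinf \<ge> 0"
    and "L\<kappa>-lipschitz_on {0..} \<kappa>" and "\<kappa> 0 = 0"
    and "\<And>n. \<gamma> n > 0 \<and> \<gamma> n \<le> \<gamma>bar" and "\<gamma> \<longlonglongrightarrow> 0"
    and "w0 \<ge> 0"
  shows "\<forall>T\<ge>0. \<exists>C\<ge>0. \<forall>n.
    (\<integral>\<^sup>+ \<omega>. (SUP t\<in>{0..T}. ennreal ((interp (\<gamma> n) \<omega> t) ^ 4))
       \<partial>(chain_law (Qker \<sigma> cinf \<kappa> (\<gamma> n)) w0 (nat \<lceil>T / \<gamma> n\<rceil>))) \<le> ennreal C"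
proof (intro allI impI)
  fix T :: real assume T: "0 \<le> T"
  have L: "0 \<le> L\<kappa>" using assms(4) by (simp add: lipschitz_on_def)
  define K where "K = Kc L\<kappa> cinf \<sigma> \<gamma>bar"
  have K0: "0 \<le> K" unfolding K_def using L assms(2,3) by (intro Kc_nonneg) auto
  define P0 where "P0 = Phi 0 (\<lambda>_. w0)"
  have P00: "0 \<le> P0" unfolding P0_def by (rule Phi_pos)
  define C where "C = exp (K * (T + \<gamma>bar)) * P0"
  show "\<exists>C\<ge>0. \<forall>n. (\<integral>\<^sup>+ \<omega>. (SUP t\<in>{0..T}. ennreal ((interp (\<gamma> n) \<omega> t) ^ 4))
       \<partial>(chain_law (Qker \<sigma> cinf \<kappa> (\<gamma> n)) w0 (nat \<lceil>T / \<gamma> n\<rceil>))) \<le> ennreal C"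
  proof (intro exI[of _ C] conjI allI)
    show "0 \<le> C" unfolding C_def using P00 by simp
    fix n
    define g where "g = \<gamma> n"
    have g: "0 < g" "g \<le> \<gamma>bar" using assms(6)[of n] by (auto simp: g_def)
    define N where "N = nat \<lceil>T / g\<rceil>"
    define Q where "Q = Qker \<sigma> cinf \<kappa> g"
    have Qm: "Q \<in> borel \<rightarrow>\<^sub>M prob_algebra borel" unfolding Q_def by (rule Qker_meas[OF assms(4)])
    have B0: "0 \<le> 1 + g * K" using g K0 by simp
    have step: "(\<integral>\<^sup>+y. ennreal (Phi (Suc k) (fun_upd \<omega> (Suc k) y)) \<partial>Q (\<omega> k)) \<le> ennreal ((1 + g * K) * Phi k \<omega>)" for \<omega> k
      unfolding Phi_upd Q_def K_def Phi_def[of k \<omega>]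
      by (rule step_full[OF assms(1) g assms(3,4,5) mx_nonneg[of k \<omega>] mx_ge[of k k \<omega>, OF order_refl]])
    have "(\<integral>\<^sup>+ \<omega>. (SUP t\<in>{0..T}. ennreal ((interp g \<omega> t) ^ 4)) \<partial>chain_law Q w0 N)
        \<le> (\<integral>\<^sup>+ \<omega>. ennreal (Phi N \<omega>) \<partial>chain_law Q w0 N)"
    proof (rule nn_integral_mono)
      fix \<omega>
      show "(SUP t\<in>{0..T}. ennreal ((interp g \<omega> t) ^ 4)) \<le> ennreal (Phi N \<omega>)"
      proof (rule SUP_least)
        fix t assume "t \<in> {0..T}"
        then have "\<bar>interp g \<omega> t\<bar> \<le> mx N \<omega>" unfolding N_def using g by (intro interp_bound) auto
        then have "\<bar>interp g \<omega> t\<bar>^4 \<le> (mx N \<omega>)^4" by (rule power_mono) simp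
        then have "(interp g \<omega> t)^4 \<le> Phi N \<omega>" using Phi_ge[of N \<omega>] by (simp add: power_even_abs_numeral)
        then show "ennreal ((interp g \<omega> t) ^ 4) \<le> ennreal (Phi N \<omega>)" by (rule ennreal_leI)
      qed
    qed
    also have "\<dots> \<le> ennreal ((1 + g * K)^N * P0)"
      unfolding P0_def by (rule chain_bound[OF Qm B0 step])
    also have "\<dots> \<le> ennreal C"
    proof (rule ennreal_leI)
      have "(1 + g * K)^N \<le> (exp (g * K))^N"
        using B0 by (intro power_mono) (auto simp: exp_ge_add_one_self)
      also have "\<dots> = exp (real N * (g * K))" by (simp add: exp_of_nat_mult)
      also have "\<dots> \<le> exp (K * (T + \<gamma>bar))"
      proof -
        have "real N = of_int \<lceil>T / g\<rceil>" unfolding N_def using T g by simp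
        also have "\<dots> \<le> T / g + 1" by linarith
        finally have "real N * g \<le> (T / g + 1) * g" using g by (intro mult_right_mono) auto
        also have "\<dots> = T + g" using g by (simp add: field_simps)
        also have "\<dots> \<le> T + \<gamma>bar" using g by simp
        finally have "real N * g \<le> T + \<gamma>bar" .
        then have "real N * g * K \<le> (T + \<gamma>bar) * K" using K0 by (rule mult_right_mono)
        then show ?thesis by (simp add: algebra_simps)
      qed
      finally have "(1 + g * K)^N \<le> exp (K * (T + \<gamma>bar))" .
      then show "(1 + g * K)^N * P0 \<le> C" unfolding C_def using P00 by (rule mult_right_mono)
    qed
    finally show "(\<integral>\<^sup>+ \<omega>. (SUP t\<in>{0..T}. ennreal ((interp (\<gamma> n) \<omega> t) ^ 4))
       \<partial>(chain_law (Qker \<sigma> cinf \<kappa> (\<gamma> n)) w0 (nat \<lceil>T / \<gamma> n\<rceil>))) \<le> ennreal C"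
      unfolding g_def N_def Q_def .
  qed
qed

end
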